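(* Let $d,d'\in\mathbb{N}$, let $U\subseteq\mathbb{R}^{d+d'}$ and $W\subseteq\mathbb{R}^d$ be measurable sets, and let $(\mathbf g(w))_{w\in W}$ be an $\mathbb{R}^{d'}$-valued Lipschitz-continuous stochastic process. Suppose that for some constants $C,\rho\in(0,\infty)$ one has for every $(w,v)\in U\cap(W\times\mathbb{R}^{d'})$ that the distribution of $\mathbf g(w)$ restricted to the ball $B_{\mathbb{R}^{d'}}(v,\rho)$ is absolutely continuous with respect to Lebesgue measure with density bounded by $C$. If $\mathcal{H}_{d'}(U)=0$, then \[ \mathbb{P}\bigl(\exists\,w\in W:\ (w,\mathbf g(w))\in U\bigr)=0. \]
   Context: $\mathcal{H}_{d'}$ denotes the $d'$-dimensional Hausdorff measure on $\mathbb{R}^{d+d'}$. *)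

theory Defs
  imports "HOL-Analysis.Analysis" "HOL-Probability.Probability"
begin

definition hausdorff_term :: "real \<Rightarrow> 'a::metric_space set \<Rightarrow> real" where
  "hausdorff_term s C = (if C = {} then 0 else if s = 0 then 1 else diameter C powr s)"

definition hausdorff_pre :: "real \<Rightarrow> real \<Rightarrow> 'a::metric_space set \<Rightarrow> ennreal" where
  "hausdorff_pre s \<delta> A =
     (INF C \<in> {C :: nat \<Rightarrow> 'a set. A \<subseteq> (\<Union>i. C i) \<and> (\<forall>i. bounded (C i) \<and> diameter (C i) \<le> \<delta>)}.
        (\<Sum>i. ennreal (hausdorff_term s (C i))))"

text \<open>s-dimensional Hausdorff (outer) measure, with the standard normalisation
  omega_s / 2^s, omega_s = pi^(s/2) / Gamma(s/2 + 1).\<close>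
definition hausdorff_measure :: "real \<Rightarrow> 'a::metric_space set \<Rightarrow> ennreal" where
  "hausdorff_measure s A =
     ennreal (pi powr (s / 2) / (Gamma (s / 2 + 1) * 2 powr s)) * (SUP \<delta> \<in> {0<..}. hausdorff_pre s \<delta> A)"

end

theory Submission
  imports Defs
begin

lemma haus_cover:
  fixes U :: "'s::metric_space set"
  assumes H: "hausdorff_measure s U = 0" and s: "s \<ge> 0" and d: "\<delta> > 0" and e: "\<epsilon> > 0"
  shows "\<exists>C. U \<subseteq> (\<Union>i. C i) \<and> (\<forall>i. bounded (C i) \<and> diameter (C i) \<le> \<delta>) \<and>
           (\<Sum>i. ennreal (hausdorff_term s (C i))) < ennreal \<epsilon>"
proof -
  have "pi powr (s / 2) / (Gamma (s / 2 + 1) * 2 powr s) > 0"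
    using s by (intro divide_pos_pos mult_pos_pos) auto
  hence "(SUP \<delta> \<in> {0<..}. hausdorff_pre s \<delta> U) = 0"
    using H unfolding hausdorff_measure_def by (simp add: ennreal_eq_0_iff)
  hence "hausdorff_pre s \<delta> U \<le> 0"
    using d by (metis SUP_upper greaterThan_iff)
  hence "hausdorff_pre s \<delta> U < ennreal \<epsilon>" using e
    by (metis ennreal_eq_0_iff le_zero_eq not_le)
  thus ?thesis unfolding hausdorff_pre_def INF_less_iff by blast
qed

lemma powr_nat_diam: "(d::real) \<ge> 0 \<Longrightarrow> n > 0 \<Longrightarrow> d powr real n = d ^ n"
  by (cases "d = 0") (auto simp: powr_realpow)

lemma key:
  fixes M :: "'m measure"
    and U :: "('a::euclidean_space \<times> 'b::euclidean_space) set"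
    and W :: "'a set"
    and g :: "'a \<Rightarrow> 'm \<Rightarrow> 'b"
    and C \<rho> :: real and K :: nat and e :: real
  assumes gm: "\<And>w. w \<in> W \<Longrightarrow> g w \<in> borel_measurable M"
    and C: "0 < C" and rho: "0 < \<rho>"
    and dens: "\<And>w v. (w, v) \<in> U \<Longrightarrow> w \<in> W \<Longrightarrow>
           \<exists>f \<in> borel_measurable lborel. (\<forall>x. 0 \<le> f x \<and> f x \<le> C) \<and>
             (\<forall>A \<in> sets borel. A \<subseteq> ball v \<rho> \<longrightarrow>
                emeasure M {\<omega> \<in> space M. g w \<omega> \<in> A} = (\<integral>\<^sup>+ x. ennreal (f x) * indicator A x \<partial>lborel))"
    and cov: "\<And>\<delta> \<epsilon>. \<delta> > 0 \<Longrightarrow> \<epsilon> > 0 \<Longrightarrow> \<exists>Cv. U \<subseteq> (\<Union>i. Cv i) \<and> (\<forall>i. bounded (Cv i) \<and> diameter (Cv i) \<le> \<delta>) \<and>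
           (\<Sum>i. ennreal (hausdorff_term (real DIM('b)) (Cv i))) < ennreal \<epsilon>"
    and e: "e > 0"
  shows "\<exists>N\<in>sets M. {\<omega>\<in>space M. K-lipschitz_on W (\<lambda>w. g w \<omega>) \<and> (\<exists>w\<in>W. (w, g w \<omega>) \<in> U)} \<subseteq> N
            \<and> emeasure M N \<le> ennreal e"
proof -
  define n where "n = DIM('b)"
  have n: "n > 0" unfolding n_def by simp
  define c where "c = C * unit_ball_vol n * (real K + 1) ^ n"
  have c: "c > 0" unfolding c_def using C by (intro mult_pos_pos) auto
  define \<delta> where "\<delta> = \<rho> / (2 * (real K + 1))"
  have d: "\<delta> > 0" unfolding \<delta>_def using rho by auto
  have Kd: "(real K + 1) * \<delta> < \<rho>" unfolding \<delta>_def using rho by (simp add: field_simps add_pos_nonneg)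
  obtain Cv where Ucov: "U \<subseteq> (\<Union>i. Cv i)" and bd: "\<And>i. bounded (Cv i)" and dm: "\<And>i. diameter (Cv i) \<le> \<delta>"
    and sm: "(\<Sum>i. ennreal (hausdorff_term (real n) (Cv i))) < ennreal (e / c)"
    using cov[OF d, of "e / c"] e c unfolding n_def by auto
  define P where "P i = (\<exists>p\<in>Cv i \<inter> U. fst p \<in> W)" for i
  define p where "p i = (SOME p. p \<in> Cv i \<and> p \<in> U \<and> fst p \<in> W)" for i
  have pP: "p i \<in> Cv i" "p i \<in> U" "fst (p i) \<in> W" if Pi0: "P i" for i
  proof -
    obtain q where q: "q \<in> Cv i \<and> q \<in> U \<and> fst q \<in> W" using Pi0 unfolding P_def by blast
    show "p i \<in> Cv i" "p i \<in> U" "fst (p i) \<in> W"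
      using someI[of "\<lambda>p. p \<in> Cv i \<and> p \<in> U \<and> fst p \<in> W", OF q] unfolding p_def by auto
  qed
  define r where "r i = (real K + 1) * diameter (Cv i)" for i
  define N where "N i = (if P i then {\<omega>\<in>space M. g (fst (p i)) \<omega> \<in> cball (snd (p i)) (r i)} else {})" for i
  have Nm: "N i \<in> sets M" for i
  proof (cases "P i")
    case True
    have "g (fst (p i)) \<in> borel_measurable M" using gm pP(3)[OF True] by auto
    hence "g (fst (p i)) -` cball (snd (p i)) (r i) \<inter> space M \<in> sets M"
      by (rule measurable_sets) auto
    moreover have "N i = g (fst (p i)) -` cball (snd (p i)) (r i) \<inter> space M"
      using True unfolding N_def by auto
    ultimately show ?thesis by simp
  qed (auto simp: N_def)
  have Nb: "emeasure M (N i) \<le> ennreal c * ennreal (hausdorff_term (real n) (Cv i))" for i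
  proof (cases "P i")
    case True
    define w v where "w = fst (p i)" and "v = snd (p i)"
    have wv: "(w, v) \<in> U" "w \<in> W" using pP[OF True] unfolding w_def v_def by auto
    have ne: "Cv i \<noteq> {}" using pP(1)[OF True] by auto
    have dg: "diameter (Cv i) \<ge> 0" using diameter_bounded_bound[OF bd pP(1)[OF True] pP(1)[OF True]] by simp
    have r0: "r i \<ge> 0" unfolding r_def using dg by simp
    have "r i \<le> (real K + 1) * \<delta>" unfolding r_def using dm[of i] by (intro mult_left_mono) auto
    hence sub: "cball v (r i) \<subseteq> ball v \<rho>" using Kd by auto
    obtain f where fm: "f \<in> borel_measurable lborel" and f: "\<And>x. 0 \<le> f x \<and> f x \<le> C"
      and fA: "\<And>A. A \<in> sets borel \<Longrightarrow> A \<subseteq> ball v \<rho> \<Longrightarrow>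
                emeasure M {\<omega> \<in> space M. g w \<omega> \<in> A} = (\<integral>\<^sup>+ x. ennreal (f x) * indicator A x \<partial>lborel)"
      using dens[OF wv] by blast
    have "emeasure M (N i) = emeasure M {\<omega> \<in> space M. g w \<omega> \<in> cball v (r i)}"
      using True unfolding N_def w_def v_def by simp
    also have "\<dots> = (\<integral>\<^sup>+ x. ennreal (f x) * indicator (cball v (r i)) x \<partial>lborel)"
      using fA[OF _ sub] by simp
    also have "\<dots> \<le> (\<integral>\<^sup>+ x. ennreal C * indicator (cball v (r i)) x \<partial>lborel)"
      using f by (intro nn_integral_mono) (auto simp: indicator_def intro: ennreal_leI)
    also have "\<dots> = ennreal C * emeasure lborel (cball v (r i))"
      by (rule nn_integral_cmult_indicator) simp
    also have "\<dots> = ennreal C * ennreal (unit_ball_vol n * r i ^ n)"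
      using emeasure_cball[OF r0, of v] unfolding n_def by simp
    also have "\<dots> = ennreal c * ennreal (hausdorff_term (real n) (Cv i))"
      using ne n dg C unfolding hausdorff_term_def c_def r_def
      by (simp add: powr_nat_diam ennreal_mult[symmetric] power_mult_distrib mult_ac)
    finally show ?thesis .
  qed (auto simp: N_def)
  have subs: "{\<omega>\<in>space M. K-lipschitz_on W (\<lambda>w. g w \<omega>) \<and> (\<exists>w\<in>W. (w, g w \<omega>) \<in> U)} \<subseteq> (\<Union>i. N i)"
  proof safe
    fix \<omega> w assume om: "\<omega> \<in> space M" and L: "K-lipschitz_on W (\<lambda>w. g w \<omega>)" and w: "w \<in> W"
      and wU: "(w, g w \<omega>) \<in> U"
    then obtain i where i: "(w, g w \<omega>) \<in> Cv i" using Ucov by auto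
    have Pi: "P i" unfolding P_def using i wU w by (intro bexI[of _ "(w, g w \<omega>)"]) auto
    have dd: "dist (w, g w \<omega>) (p i) \<le> diameter (Cv i)"
      by (rule diameter_bounded_bound[OF bd i pP(1)[OF Pi]])
    have d1: "dist w (fst (p i)) \<le> diameter (Cv i)"
      using dist_fst_le[of "(w, g w \<omega>)" "p i"] dd by simp
    have d2: "dist (g w \<omega>) (snd (p i)) \<le> diameter (Cv i)"
      using dist_snd_le[of "(w, g w \<omega>)" "p i"] dd by simp
    have d3: "dist (g (fst (p i)) \<omega>) (g w \<omega>) \<le> real K * dist (fst (p i)) w"
      by (rule lipschitz_onD[OF L pP(3)[OF Pi] w])
    have "dist (g (fst (p i)) \<omega>) (snd (p i)) \<le> dist (g (fst (p i)) \<omega>) (g w \<omega>) + dist (g w \<omega>) (snd (p i))"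
      by (rule dist_triangle)
    also have "\<dots> \<le> real K * diameter (Cv i) + diameter (Cv i)"
      using d3 d1 d2 by (smt (verit, ccfv_SIG) dist_commute mult_left_mono of_nat_0_le_iff)
    finally have "dist (snd (p i)) (g (fst (p i)) \<omega>) \<le> r i"
      unfolding r_def by (simp add: dist_commute algebra_simps)
    thus "\<omega> \<in> (\<Union>i. N i)" using Pi om unfolding N_def by auto
  qed
  have "emeasure M (\<Union>i. N i) \<le> (\<Sum>i. emeasure M (N i))"
    by (rule emeasure_subadditive_countably) (use Nm in auto)
  also have "\<dots> \<le> (\<Sum>i. ennreal c * ennreal (hausdorff_term (real n) (Cv i)))"
    by (intro suminf_le Nb) auto
  also have "\<dots> = ennreal c * (\<Sum>i. ennreal (hausdorff_term (real n) (Cv i)))"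
    by simp
  also have "\<dots> \<le> ennreal c * ennreal (e / c)"
    using sm by (intro mult_left_mono) auto
  also have "\<dots> = ennreal e" using c e by (subst ennreal_mult[symmetric]) auto
  finally show ?thesis using subs Nm by blast
qed

lemma null_from_eps:
  assumes P: "prob_space M"
    and h: "\<And>e. e > 0 \<Longrightarrow> \<exists>N\<in>sets M. A \<subseteq> N \<and> emeasure M N \<le> ennreal e"
  shows "\<exists>N\<in>null_sets M. A \<subseteq> N"
proof -
  interpret prob_space M by (rule P)
  have "\<forall>m. \<exists>N. N \<in> sets M \<and> A \<subseteq> N \<and> emeasure M N \<le> ennreal (inverse (real (Suc m)))"
  proof
    fix m show "\<exists>N. N \<in> sets M \<and> A \<subseteq> N \<and> emeasure M N \<le> ennreal (inverse (real (Suc m)))"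
      using h[of "inverse (real (Suc m))"] by auto
  qed
  then obtain Nm where Nm: "\<And>m. Nm m \<in> sets M" "\<And>m. A \<subseteq> Nm m"
    "\<And>m. emeasure M (Nm m) \<le> ennreal (inverse (real (Suc m)))" by metis
  define N where "N = (\<Inter>m. Nm m)"
  have NS: "N \<in> sets M" unfolding N_def using Nm(1) by auto
  have AN: "A \<subseteq> N" unfolding N_def using Nm(2) by auto
  have le: "measure M N \<le> inverse (real (Suc m))" for m
  proof -
    have "emeasure M N \<le> emeasure M (Nm m)"
      by (rule emeasure_mono) (use Nm(1) in \<open>auto simp: N_def\<close>)
    also have "\<dots> \<le> ennreal (inverse (real (Suc m)))" by (rule Nm(3))
    finally show ?thesis using NS by (simp add: emeasure_eq_measure)
  qed
  have "measure M N = 0"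
  proof (rule ccontr)
    assume "measure M N \<noteq> 0"
    hence "measure M N > 0" by (simp add: order_less_le)
    then obtain m where "inverse (real (Suc m)) < measure M N" using reals_Archimedean by blast
    with le[of m] show False by simp
  qed
  hence "N \<in> null_sets M" using NS by (simp add: emeasure_eq_measure null_sets_def)
  thus ?thesis using AN by blast
qed

theorem lemma2p6:
  fixes M :: "'m measure"
    and U :: "('a::euclidean_space \<times> 'b::euclidean_space) set"
    and W :: "'a set"
    and g :: "'a \<Rightarrow> 'm \<Rightarrow> 'b"
    and C \<rho> :: real
  assumes "prob_space M"
    and "U \<in> sets lebesgue"
    and "W \<in> sets lebesgue"
    and "\<And>w. w \<in> W \<Longrightarrow> g w \<in> borel_measurable M"
    and "\<And>\<omega>. \<omega> \<in> space M \<Longrightarrow> \<exists>L. L-lipschitz_on W (\<lambda>w. g w \<omega>)"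
    and "0 < C" and "0 < \<rho>"
    and "\<And>w v. (w, v) \<in> U \<Longrightarrow> w \<in> W \<Longrightarrow>
           \<exists>f \<in> borel_measurable lborel. (\<forall>x. 0 \<le> f x \<and> f x \<le> C) \<and>
             (\<forall>A \<in> sets borel. A \<subseteq> ball v \<rho> \<longrightarrow>
                emeasure M {\<omega> \<in> space M. g w \<omega> \<in> A} = (\<integral>\<^sup>+ x. ennreal (f x) * indicator A x \<partial>lborel))"
    and "hausdorff_measure (real DIM('b)) U = 0"
  shows "\<exists>N \<in> null_sets M. {\<omega> \<in> space M. \<exists>w \<in> W. (w, g w \<omega>) \<in> U} \<subseteq> N"
proof -
  have cov: "\<exists>Cv. U \<subseteq> (\<Union>i. Cv i) \<and> (\<forall>i. bounded (Cv i) \<and> diameter (Cv i) \<le> \<delta>) \<and>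
           (\<Sum>i. ennreal (hausdorff_term (real DIM('b)) (Cv i))) < ennreal \<epsilon>"
    if "\<delta> > 0" "\<epsilon> > 0" for \<delta> \<epsilon>
    by (rule haus_cover[OF assms(9) _ that]) simp
  define A where "A K = {\<omega>\<in>space M. (real K)-lipschitz_on W (\<lambda>w. g w \<omega>) \<and> (\<exists>w\<in>W. (w, g w \<omega>) \<in> U)}" for K :: nat
  have "\<exists>N\<in>null_sets M. A K \<subseteq> N" for K
    unfolding A_def
    by (rule null_from_eps[OF assms(1)], rule key[OF assms(4) assms(6) assms(7) assms(8) cov]) auto
  then obtain NK where NK: "\<And>K. NK K \<in> null_sets M" "\<And>K. A K \<subseteq> NK K" by metis
  have "{\<omega> \<in> space M. \<exists>w \<in> W. (w, g w \<omega>) \<in> U} \<subseteq> (\<Union>K. A K)"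
  proof safe
    fix \<omega> w assume om: "\<omega> \<in> space M" and w: "w \<in> W" "(w, g w \<omega>) \<in> U"
    obtain L where L: "L-lipschitz_on W (\<lambda>w. g w \<omega>)" using assms(5)[OF om] by blast
    have "(real (nat \<lceil>L\<rceil>))-lipschitz_on W (\<lambda>w. g w \<omega>)"
      by (rule lipschitz_on_le[OF L]) linarith
    thus "\<omega> \<in> (\<Union>K. A K)" using om w unfolding A_def by blast
  qed
  also have "\<dots> \<subseteq> (\<Union>K. NK K)" using NK(2) by blast
  finally show ?thesis using NK(1) by blast
qed

end
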